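(* Let $C$ be the index of a source row/column of the padded incident matrix $\widetilde A$, let $P_{\mathrm{cur}}$ be (a pair of) column indices of $X\in\mathbb{R}^{K\times d}$ holding the positional embedding of row/column $C$, and let $D$ be a target column index. Then: (1) a single transformer layer can simulate reading a row of $\widetilde A$, i.e. $X[:,D]\leftarrow\widetilde A[C,:]$ (as a column); and (2) a single transformer layer can simulate reading a column of $\widetilde A$, i.e. $X[:,D]\leftarrow\widetilde A[:,C]$.
   Context: Conventions: rows/columns indexed from $1$; $X[i,j]$ is the $(i,j)$ entry, $X[:,j]$ the $j$-th column, $\widetilde A[C,:]$ the $C$-th row. $\phi(x)=\max\{x,0\}$ entrywise. Hardmax $\sigma$: row $i$ of $\sigma(\Phi)$ is $\frac{1}{|S_i|}\sum_{k\in S_i}e_k$, $S_i=\{k:\Phi_{ik}=\max_j\Phi_{ij}\}$. Positional encoding: $\widehat\delta>0$ is the nearest representable approximation of the minimum increment angle, $R_{\widehat\delta}=\begin{bmatrix}\cos\widehat\delta&-\sin\widehat\delta\\ \sin\widehat\delta&\cos\widehat\delta\end{bmatrix}$, $p_0=(0,1)^\top$, $p_i=R_{\widehat\delta}^\top p_{i-1}$, position $i$ encoded by $(p_i^{(1)},p_i^{(2)})$. A weighted hypergraph has vertices $v_1,\dots,v_{n_v}$, hyperedges $e_1,\dots,e_{n_e}$ with weights $w(e_j)>0$; its incident matrix $A\in\mathbb{R}^{n_v\times n_e}$ has $A_{ij}=w(e_j)$ if $v_i\in e_j$ and $0$ otherwise; for $K\ge\max\{n_v,n_e\}+1$, the padded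 incident matrix $\widetilde A\in\mathbb{R}^{K\times K}$ has $\widetilde A_{i+1,j+1}=A_{ij}$ and zeros elsewhere. A transformer layer on $X\in\mathbb{R}^{K\times d}$ is $f(X,\widetilde A)=f_{\mathrm{mlp}}(f_{\mathrm{attn}}(X,\widetilde A))$, $f_{\mathrm{attn}}(X,\widetilde A)=\sum_{i\in M_A}\psi^{(i)}(X,\widetilde A)+\sum_{i\in M_{A^\top}}\psi^{(i)}(X,\widetilde A^\top)+\sum_{i\in M}\psi^{(i)}(X,I_K)+X$, $\psi(X,B)=B\,\sigma(XW_QW_K^\top X^\top)XW_V$ ($W_Q,W_K\in\mathbb{R}^{d\times2}$, $W_V\in\mathbb{R}^{d\times d}$), $f_{\mathrm{mlp}}(X)=Z^{(4)}W^{(4)}+X$, $Z^{(1)}=X$, $Z^{(j+1)}=\phi(Z^{(j)}W^{(j)})$ ($j=1,2,3$). Storage convention: scalars in the top row of a column (rest $0$), arrays of length $K-1$ in rows $2,\dots,K$ (top $0$); designated columns $B_{\mathrm{global}}$ (top $1$, rest $0$), $B_{\mathrm{local}}$ (top $0$, rest $1$), positional columns $P_1,P_2$ (array position $i$ holds $p_i^{(1)},p_i^{(2)}$), and scratchpad columns. "Simulating an operation" means the layer's weights can be chosen so that applying it to $X$ performs the stated update. *)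

theory Defs
  imports Complex_Main
begin

text \<open>Matrices are functions nat => nat => real, indexed from 1; the dimensions are
  carried explicitly and only entries within range matter (all sums range over
  explicit index intervals).\<close>

type_synonym mat = "nat \<Rightarrow> nat \<Rightarrow> real"

definition matmul :: "nat \<Rightarrow> mat \<Rightarrow> mat \<Rightarrow> mat" where
  "matmul n A B = (\<lambda>i j. \<Sum>k = 1..n. A i k * B k j)"

definition mtrans :: "mat \<Rightarrow> mat" where
  "mtrans A = (\<lambda>i j. A j i)"

definition hardmax :: "nat \<Rightarrow> mat \<Rightarrow> mat" where
  "hardmax K Phi = (\<lambda>i k.
     let m = Max {Phi i j | j. j \<in> {1..K}};
         S = {j \<in> {1..K}. Phi i j = m}
     in if k \<in> S then 1 / real (card S) else 0)"

definition relu_mat :: "mat \<Rightarrow> mat" where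
  "relu_mat Z = (\<lambda>i j. max (Z i j) 0)"

definition psi :: "nat \<Rightarrow> nat \<Rightarrow> mat \<Rightarrow> mat \<Rightarrow> mat \<Rightarrow> mat \<Rightarrow> mat \<Rightarrow> mat" where
  "psi K d X B WQ WK WV =
     matmul K B (matmul K (hardmax K (matmul 2 (matmul d X WQ) (mtrans (matmul d X WK))))
                          (matmul d X WV))"

record tlayer =
  headsA  :: "(mat \<times> mat \<times> mat) list"
  headsAT :: "(mat \<times> mat \<times> mat) list"
  headsI  :: "(mat \<times> mat \<times> mat) list"
  hid1 :: nat
  hid2 :: nat
  hid3 :: nat
  mW1 :: mat
  mW2 :: mat
  mW3 :: mat
  mW4 :: mat

definition idmat :: mat where
  "idmat = (\<lambda>i j. if i = j then 1 else 0)"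

definition f_attn :: "nat \<Rightarrow> nat \<Rightarrow> tlayer \<Rightarrow> mat \<Rightarrow> mat \<Rightarrow> mat" where
  "f_attn K d L X At = (\<lambda>i j.
       (\<Sum>(Q, Kw, V) \<leftarrow> headsA L. psi K d X At Q Kw V i j)
     + (\<Sum>(Q, Kw, V) \<leftarrow> headsAT L. psi K d X (mtrans At) Q Kw V i j)
     + (\<Sum>(Q, Kw, V) \<leftarrow> headsI L. psi K d X idmat Q Kw V i j)
     + X i j)"

definition f_mlp :: "nat \<Rightarrow> tlayer \<Rightarrow> mat \<Rightarrow> mat" where
  "f_mlp d L X =
     (let Z2 = relu_mat (matmul d X (mW1 L));
          Z3 = relu_mat (matmul (hid1 L) Z2 (mW2 L));
          Z4 = relu_mat (matmul (hid2 L) Z3 (mW3 L))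
      in (\<lambda>i j. matmul (hid3 L) Z4 (mW4 L) i j + X i j))"

definition tlayer_apply :: "nat \<Rightarrow> nat \<Rightarrow> tlayer \<Rightarrow> mat \<Rightarrow> mat \<Rightarrow> mat" where
  "tlayer_apply K d L X At = f_mlp d L (f_attn K d L X At)"

fun posenc :: "real \<Rightarrow> nat \<Rightarrow> real \<times> real" where
  "posenc \<delta> 0 = (0, 1)"
| "posenc \<delta> (Suc i) =
     (let (x, y) = posenc \<delta> i in (cos \<delta> * x + sin \<delta> * y, - sin \<delta> * x + cos \<delta> * y))"

definition weighted_hypergraph :: "nat \<Rightarrow> nat \<Rightarrow> (nat \<Rightarrow> nat set) \<Rightarrow> (nat \<Rightarrow> real) \<Rightarrow> bool" where
  "weighted_hypergraph nv ne E w \<longleftrightarrow> (\<forall>j\<in>{1..ne}. E j \<subseteq> {1..nv} \<and> w j > 0)"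

definition incident :: "(nat \<Rightarrow> nat set) \<Rightarrow> (nat \<Rightarrow> real) \<Rightarrow> mat" where
  "incident E w = (\<lambda>i j. if i \<in> E j then w j else 0)"

definition padded_incident :: "nat \<Rightarrow> nat \<Rightarrow> (nat \<Rightarrow> nat set) \<Rightarrow> (nat \<Rightarrow> real) \<Rightarrow> mat" where
  "padded_incident nv ne E w = (\<lambda>i j.
     if 2 \<le> i \<and> i \<le> nv + 1 \<and> 2 \<le> j \<and> j \<le> ne + 1 then incident E w (i - 1) (j - 1) else 0)"

text \<open>Storage-convention invariants of the state X (K x d): B_global, B_local, positional
  columns P1, P2 (row r >= 2 = array position r-1 holds p_(r-1)), and P_cur = (Pc1, Pc2)
  holding, as scalars in the top row, the positional embedding of row/column C.\<close>
definition state_ok :: "nat \<Rightarrow> real \<Rightarrow> nat \<Rightarrow> nat \<Rightarrow> nat \<Rightarrow> nat \<Rightarrow> nat \<Rightarrow> nat \<Rightarrow> nat \<Rightarrow> mat \<Rightarrow> bool" where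
  "state_ok K \<delta> Bg Bl P1 P2 Pc1 Pc2 C X \<longleftrightarrow>
     (\<forall>i\<in>{1..K}.
        X i Bg = (if i = 1 then 1 else 0) \<and>
        X i Bl = (if i = 1 then 0 else 1) \<and>
        X i P1 = (if i = 1 then 0 else fst (posenc \<delta> (i - 1))) \<and>
        X i P2 = (if i = 1 then 0 else snd (posenc \<delta> (i - 1))) \<and>
        X i Pc1 = (if i = 1 then X C P1 else 0) \<and>
        X i Pc2 = (if i = 1 then X C P2 else 0))"

end

theory Submission
  imports Defs
begin

lemma posenc_eq: "posenc \<delta> n = (sin (real n * \<delta>), cos (real n * \<delta>))"
  by (induction n) (simp_all add: distrib_right sin_add cos_add algebra_simps)

lemma posenc_inner: "fst (posenc \<delta> a) * fst (posenc \<delta> b) + snd (posenc \<delta> a) * snd (posenc \<delta> b)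
   = cos ((real a - real b) * \<delta>)"
  by (simp add: posenc_eq cos_diff left_diff_distrib algebra_simps)

lemma cos_lt1: assumes "x \<noteq> 0" "\<bar>x\<bar> < 2 * pi" shows "cos x < 1"
proof -
  have "cos x \<noteq> 1"
  proof
    assume "cos x = 1"
    then obtain n :: int where n: "x = of_int n * (2 * pi)" using cos_one_2pi_int[of x] by (auto simp: mult.assoc)
    then have "\<bar>of_int n\<bar> * (2*pi) < 1 * (2 * pi)" using assms(2) by (simp add: abs_mult)
    then have "\<bar>of_int n\<bar> < (1::real)" by (simp del: of_int_abs)
    then have "n = 0" by linarith
    then show False using n assms(1) by simp
  qed
  then show ?thesis using cos_le_one[of x] by linarith
qed

lemma matmul2: "matmul 2 A B i j = A i 1 * B 1 j + A i 2 * B 2 j"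
  by (simp add: matmul_def numeral_2_eq_2)

definition u :: "real \<Rightarrow> nat \<Rightarrow> nat \<Rightarrow> mat" where
  "u s a b = (\<lambda>r c. if r = a \<and> c = b then s else 0)"
definition madd :: "mat \<Rightarrow> mat \<Rightarrow> mat" where
  "madd A B = (\<lambda>r c. A r c + B r c)"

lemma matmul_u: "a \<in> {1..d} \<Longrightarrow> matmul d X (u s a b) i c = (if c = b then s * X i a else 0)"
proof -
  assume a: "a \<in> {1..d}"
  have "matmul d X (u s a b) i c = (\<Sum>r=1..d. if r = a then (if c = b then s * X i a else 0) else 0)"
    unfolding matmul_def u_def by (rule sum.cong) auto
  also have "\<dots> = (if c = b then s * X i a else 0)" using a by (simp add: sum.delta)
  finally show ?thesis .
qed

lemma matmul_madd: "matmul n X (madd A B) i c = matmul n X A i c + matmul n X B i c"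
  by (simp add: matmul_def madd_def distrib_left sum.distrib)

lemma hardmax_gen:
  assumes "j0 \<in> {1..K}" "\<forall>j\<in>{1..K}. Phi i j \<le> Phi i j0"
  shows "hardmax K Phi i k = (let S = {j \<in> {1..K}. Phi i j = Phi i j0} in if k \<in> S then 1 / real (card S) else 0)"
proof -
  have "Max {Phi i j | j. j \<in> {1..K}} = Phi i j0"
  proof (rule Max_eqI)
    have "{Phi i j | j. j \<in> {1..K}} = (\<lambda>j. Phi i j) ` {1..K}" by auto
    then show "finite {Phi i j | j. j \<in> {1..K}}" by simp
  qed (use assms in auto)
  then show ?thesis unfolding hardmax_def Let_def by simp
qed

lemma hardmax_one:
  assumes "j0 \<in> {1..K}" "\<forall>j\<in>{1..K}. j \<noteq> j0 \<longrightarrow> Phi i j < Phi i j0"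
  shows "hardmax K Phi i k = (if k = j0 then 1 else 0)"
proof -
  have S: "{j \<in> {1..K}. Phi i j = Phi i j0} = {j0}" using assms by force
  have "\<forall>j\<in>{1..K}. Phi i j \<le> Phi i j0" using assms by force
  from hardmax_gen[of j0 K Phi i k, OF assms(1) this] show ?thesis unfolding S Let_def by auto
qed

lemma hardmax_two:
  assumes "j0 \<in> {1..K}" "j1 \<in> {1..K}" "j0 \<noteq> j1" "Phi i j1 = Phi i j0"
    "\<forall>j\<in>{1..K}. j \<noteq> j0 \<and> j \<noteq> j1 \<longrightarrow> Phi i j < Phi i j0"
  shows "hardmax K Phi i k = (if k = j0 \<or> k = j1 then 1/2 else 0)"
proof -
  have S: "{j \<in> {1..K}. Phi i j = Phi i j0} = {j0, j1}" using assms by force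
  have "\<forall>j\<in>{1..K}. Phi i j \<le> Phi i j0" using assms by force
  from hardmax_gen[of j0 K Phi i k, OF assms(1) this] show ?thesis unfolding S Let_def using assms(3) by auto
qed

lemma head_lemma:
  fixes K d :: nat and \<delta> :: real and Bg Bl P1 P2 Pc1 Pc2 D :: nat and B X :: mat
  assumes dpos: "0 < \<delta>" and dK: "(real K - 1) * \<delta> < 2 * pi"
    and dist: "distinct [Bg, Bl, P1, P2, Pc1, Pc2, D]"
    and sub: "set [Bg, Bl, P1, P2, Pc1, Pc2, D] \<subseteq> {1..d}"
    and C: "C \<in> {1..K}" and st: "state_ok K \<delta> Bg Bl P1 P2 Pc1 Pc2 C X"
    and B1: "\<forall>i. B i 1 = 0"
    and i: "i \<in> {1..K}"
  shows "psi K d X B (madd (u 1 P1 1) (u 1 P2 2))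
            (madd (madd (u 1 P1 1) (u 1 Pc1 1)) (madd (u 1 P2 2) (u 1 Pc2 2))) (u 2 Bg D) i j
       + psi K d X idmat (madd (u 1 P1 1) (madd (u 1 P2 2) (u 1 Bg 2)))
            (madd (u 1 P1 1) (madd (u 1 P2 2) (u 1 Bg 2))) (u (-1) D D) i j
       + X i j = (if j = D then B i C else X i j)"
proof -
  have inD: "Bg \<in> {1..d}" "P1 \<in> {1..d}" "P2 \<in> {1..d}" "Pc1 \<in> {1..d}" "Pc2 \<in> {1..d}" "D \<in> {1..d}"
    using sub by auto
  have X: "\<And>r. r \<in> {1..K} \<Longrightarrow>
        X r Bg = (if r = 1 then 1 else 0) \<and>
        X r P1 = (if r = 1 then 0 else fst (posenc \<delta> (r - 1))) \<and>
        X r P2 = (if r = 1 then 0 else snd (posenc \<delta> (r - 1))) \<and>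
        X r Pc1 = (if r = 1 then X C P1 else 0) \<and>
        X r Pc2 = (if r = 1 then X C P2 else 0)"
    using st unfolding state_ok_def by blast
  have XC: "X C P1 = (if C = 1 then 0 else fst (posenc \<delta> (C - 1)))"
           "X C P2 = (if C = 1 then 0 else snd (posenc \<delta> (C - 1)))" using X[OF C] by auto
  have cosl: "cos ((real a - real b) * \<delta>) < 1" if "a \<in> {1..K}" "b \<in> {1..K}" "a \<noteq> b" for a b
  proof (rule cos_lt1)
    show "(real a - real b) * \<delta> \<noteq> 0" using that dpos by auto
    have "\<bar>real a - real b\<bar> \<le> real K - 1" using that by auto
    then have m: "\<bar>real a - real b\<bar> * \<delta> \<le> (real K - 1) * \<delta>" using dpos by (simp add: mult_right_mono)
    have "\<bar>(real a - real b) * \<delta>\<bar> = \<bar>real a - real b\<bar> * \<delta>" using dpos by (simp add: abs_mult)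
    then show "\<bar>(real a - real b) * \<delta>\<bar> < 2 * pi" using m dK by linarith
  qed
  have inner: "fst (posenc \<delta> (a - 1)) * fst (posenc \<delta> (b - 1)) + snd (posenc \<delta> (a - 1)) * snd (posenc \<delta> (b - 1))
     = cos ((real a - real b) * \<delta>)" if "a \<ge> 1" "b \<ge> 1" for a b
    using posenc_inner[of \<delta> "a - 1" "b - 1"] that by (simp add: of_nat_diff)
  define Phi1 where "Phi1 = matmul 2 (matmul d X (madd (u 1 P1 1) (u 1 P2 2)))
      (mtrans (matmul d X (madd (madd (u 1 P1 1) (u 1 Pc1 1)) (madd (u 1 P2 2) (u 1 Pc2 2)))))"
  have Phi1: "Phi1 k m = X k P1 * (X m P1 + X m Pc1) + X k P2 * (X m P2 + X m Pc2)" for k m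
    unfolding Phi1_def matmul2 mtrans_def using inD dist by (simp add: matmul_madd matmul_u)
  have XV1: "matmul d X (u 2 Bg D) m j = (if j = D then 2 * X m Bg else 0)" for m
    using inD by (simp add: matmul_u)
  have v1: "(\<Sum>m = 1..K. hardmax K Phi1 k m * matmul d X (u 2 Bg D) m j) = (if j = D \<and> k = C then 1 else 0)"
    if k: "k \<in> {2..K}" for k
  proof -
    have ph: "Phi1 k m = (if m = 1 then (if C = 1 then 0 else cos ((real k - real C) * \<delta>)) else cos ((real k - real m) * \<delta>))"
      if "m \<in> {1..K}" for m
      using that k X[OF that] X[of k] XC inner[of k m] inner[of k C] C unfolding Phi1 by auto
    have hm: "hardmax K Phi1 k m = (if k = C then (if m = 1 \<or> m = C then 1/2 else 0) else (if m = k then 1 else 0))" for m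
    proof (cases "k = C")
      case True
      have "hardmax K Phi1 k m = (if m = k \<or> m = 1 then 1/2 else 0)"
      proof (rule hardmax_two)
        show "Phi1 k 1 = Phi1 k k" using ph[of 1] ph[of k] k True by auto
        show "\<forall>j\<in>{1..K}. j \<noteq> k \<and> j \<noteq> 1 \<longrightarrow> Phi1 k j < Phi1 k k"
          using ph k cosl[of k] by auto
      qed (use k in auto)
      then show ?thesis using True by auto
    next
      case False
      have "hardmax K Phi1 k m = (if m = k then 1 else 0)"
      proof (rule hardmax_one)
        show "\<forall>j\<in>{1..K}. j \<noteq> k \<longrightarrow> Phi1 k j < Phi1 k k"
          using ph k cosl[of k] C False by auto
      qed (use k in auto)
      then show ?thesis using False by auto
    qed
    have "(\<Sum>m = 1..K. hardmax K Phi1 k m * matmul d X (u 2 Bg D) m j)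
        = (\<Sum>m = 1..K. if m = 1 then (if j = D \<and> k = C then 1 else 0) else 0)"
    proof (rule sum.cong)
      fix m assume m: "m \<in> {1..K}"
      show "hardmax K Phi1 k m * matmul d X (u 2 Bg D) m j = (if m = 1 then (if j = D \<and> k = C then 1 else 0) else 0)"
        unfolding hm XV1 using X[OF m] k by auto
    qed simp
    also have "\<dots> = (if j = D \<and> k = C then 1 else 0)" using k by (simp add: sum.delta)
    finally show ?thesis .
  qed
  have h1: "psi K d X B (madd (u 1 P1 1) (u 1 P2 2))
            (madd (madd (u 1 P1 1) (u 1 Pc1 1)) (madd (u 1 P2 2) (u 1 Pc2 2))) (u 2 Bg D) i j
          = (if j = D then B i C else 0)"
  proof -
    have "psi K d X B (madd (u 1 P1 1) (u 1 P2 2))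
            (madd (madd (u 1 P1 1) (u 1 Pc1 1)) (madd (u 1 P2 2) (u 1 Pc2 2))) (u 2 Bg D) i j
       = (\<Sum>k = 1..K. B i k * (\<Sum>m = 1..K. hardmax K Phi1 k m * matmul d X (u 2 Bg D) m j))"
      unfolding psi_def Phi1_def by (simp add: matmul_def)
    also have "\<dots> = (\<Sum>k = 1..K. if k = C then (if j = D then B i C else 0) else 0)"
    proof (rule sum.cong)
      fix k assume k: "k \<in> {1..K}"
      show "B i k * (\<Sum>m = 1..K. hardmax K Phi1 k m * matmul d X (u 2 Bg D) m j) = (if k = C then (if j = D then B i C else 0) else 0)"
      proof (cases "k = 1")
        case True then show ?thesis using B1 by auto
      next
        case False then have "k \<in> {2..K}" using k by auto
        then show ?thesis using v1 by auto
      qed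
    qed simp
    also have "\<dots> = (if j = D then B i C else 0)" using C by (simp add: sum.delta)
    finally show ?thesis .
  qed
  define W2 where "W2 = madd (u 1 P1 1) (madd (u 1 P2 2) (u 1 Bg 2))"
  define Phi2 where "Phi2 = matmul 2 (matmul d X W2) (mtrans (matmul d X W2))"
  have Phi2: "Phi2 k m = X k P1 * X m P1 + (X k P2 + X k Bg) * (X m P2 + X m Bg)" for k m
    unfolding Phi2_def W2_def matmul2 mtrans_def using inD dist by (simp add: matmul_madd matmul_u)
  have q: "X r P1 = fst (posenc \<delta> (r - 1)) \<and> X r P2 + X r Bg = snd (posenc \<delta> (r - 1))" if "r \<in> {1..K}" for r
    using X[OF that] by auto
  have ph2: "Phi2 k m = cos ((real k - real m) * \<delta>)" if "k \<in> {1..K}" "m \<in> {1..K}" for k m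
    unfolding Phi2 using q[OF that(1)] q[OF that(2)] inner[of k m] that by auto
  have hm2: "hardmax K Phi2 k m = (if m = k then 1 else 0)" if k: "k \<in> {1..K}" for k m
  proof (rule hardmax_one)
    show "\<forall>j\<in>{1..K}. j \<noteq> k \<longrightarrow> Phi2 k j < Phi2 k k"
      using ph2 k cosl[of k] by auto
  qed (use k in auto)
  have XV2: "matmul d X (u (-1) D D) m j = (if j = D then - X m D else 0)" for m
    using inD by (simp add: matmul_u)
  have h2: "psi K d X idmat W2 W2 (u (-1) D D) i j = (if j = D then - X i D else 0)"
  proof -
    have "psi K d X idmat W2 W2 (u (-1) D D) i j
       = (\<Sum>k = 1..K. idmat i k * (\<Sum>m = 1..K. hardmax K Phi2 k m * matmul d X (u (-1) D D) m j))"
      unfolding psi_def Phi2_def by (simp add: matmul_def)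
    also have "\<dots> = (\<Sum>k = 1..K. if k = i then (if j = D then - X i D else 0) else 0)"
    proof (rule sum.cong)
      fix k assume k: "k \<in> {1..K}"
      have "(\<Sum>m = 1..K. hardmax K Phi2 k m * matmul d X (u (-1) D D) m j)
          = (\<Sum>m = 1..K. if m = k then matmul d X (u (-1) D D) k j else 0)"
        by (rule sum.cong) (auto simp: hm2[OF k])
      also have "\<dots> = matmul d X (u (-1) D D) k j" using k by (simp add: sum.delta)
      finally show "idmat i k * (\<Sum>m = 1..K. hardmax K Phi2 k m * matmul d X (u (-1) D D) m j)
          = (if k = i then (if j = D then - X i D else 0) else 0)"
        by (simp add: idmat_def XV2)
    qed simp
    also have "\<dots> = (if j = D then - X i D else 0)" using i by (simp add: sum.delta)
    finally show ?thesis .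
  qed
  show ?thesis using h1 h2 unfolding W2_def by auto
qed

theorem lemmaC7:
  fixes K d :: nat and \<delta> :: real and Bg Bl P1 P2 Pc1 Pc2 D :: nat
  assumes "0 < \<delta>" and "(real K - 1) * \<delta> < 2 * pi"
    and "distinct [Bg, Bl, P1, P2, Pc1, Pc2, D]"
    and "set [Bg, Bl, P1, P2, Pc1, Pc2, D] \<subseteq> {1..d}"
  shows
    "(\<exists>L. \<forall>nv ne E w C X.
         weighted_hypergraph nv ne E w \<and> max nv ne + 1 \<le> K \<and> C \<in> {1..K} \<and>
         state_ok K \<delta> Bg Bl P1 P2 Pc1 Pc2 C X \<longrightarrow>
         (\<forall>i\<in>{1..K}. \<forall>j\<in>{1..d}.
            tlayer_apply K d L X (padded_incident nv ne E w) i j =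
            (if j = D then padded_incident nv ne E w C i else X i j)))
   \<and> (\<exists>L. \<forall>nv ne E w C X.
         weighted_hypergraph nv ne E w \<and> max nv ne + 1 \<le> K \<and> C \<in> {1..K} \<and>
         state_ok K \<delta> Bg Bl P1 P2 Pc1 Pc2 C X \<longrightarrow>
         (\<forall>i\<in>{1..K}. \<forall>j\<in>{1..d}.
            tlayer_apply K d L X (padded_incident nv ne E w) i j =
            (if j = D then padded_incident nv ne E w i C else X i j)))"
proof -
  define WQ1 where "WQ1 = madd (u 1 P1 1) (u 1 P2 2)"
  define WK1 where "WK1 = madd (madd (u 1 P1 1) (u 1 Pc1 1)) (madd (u 1 P2 2) (u 1 Pc2 2))"
  define W2 where "W2 = madd (u 1 P1 1) (madd (u 1 P2 2) (u 1 Bg 2))"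
  define Z :: mat where "Z = (\<lambda>_ _. 0)"
  have mlp: "f_mlp d L Y = Y" if "hid3 L = 0" for L Y
    unfolding f_mlp_def Let_def matmul_def using that by simp
  let ?L1 = "\<lparr>headsA = [], headsAT = [(WQ1, WK1, u 2 Bg D)], headsI = [(W2, W2, u (-1) D D)],
     hid1 = 0, hid2 = 0, hid3 = 0, mW1 = Z, mW2 = Z, mW3 = Z, mW4 = Z\<rparr>"
  let ?L2 = "\<lparr>headsA = [(WQ1, WK1, u 2 Bg D)], headsAT = [], headsI = [(W2, W2, u (-1) D D)],
     hid1 = 0, hid2 = 0, hid3 = 0, mW1 = Z, mW2 = Z, mW3 = Z, mW4 = Z\<rparr>"
  have mlp1: "f_mlp d ?L1 Y = Y" for Y by (rule mlp) simp
  have mlp2: "f_mlp d ?L2 Y = Y" for Y by (rule mlp) simp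
  have A1: "padded_incident nv ne E w 1 x = 0" "padded_incident nv ne E w x 1 = 0" for nv ne E w x
    unfolding padded_incident_def by auto
  show ?thesis
  proof (intro conjI exI allI impI ballI)
    fix nv ne E w C X i j
    assume H: "weighted_hypergraph nv ne E w \<and> max nv ne + 1 \<le> K \<and> C \<in> {1..K} \<and>
         state_ok K \<delta> Bg Bl P1 P2 Pc1 Pc2 C X" and i: "i \<in> {1..K}" and j: "j \<in> {1..d}"
    have B1: "\<forall>i. mtrans (padded_incident nv ne E w) i 1 = 0" using A1 by (simp add: mtrans_def)
    show "tlayer_apply K d ?L1 X (padded_incident nv ne E w) i j =
            (if j = D then padded_incident nv ne E w C i else X i j)"
      using head_lemma[OF assms, where C=C and X=X and B="mtrans (padded_incident nv ne E w)" and i=i and j=j] H B1 i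
      unfolding tlayer_apply_def mlp1 unfolding f_attn_def WQ1_def WK1_def W2_def
      by (simp add: mtrans_def)
  next
    fix nv ne E w C X i j
    assume H: "weighted_hypergraph nv ne E w \<and> max nv ne + 1 \<le> K \<and> C \<in> {1..K} \<and>
         state_ok K \<delta> Bg Bl P1 P2 Pc1 Pc2 C X" and i: "i \<in> {1..K}" and j: "j \<in> {1..d}"
    have B1: "\<forall>i. padded_incident nv ne E w i 1 = 0" using A1 by simp
    show "tlayer_apply K d ?L2 X (padded_incident nv ne E w) i j =
            (if j = D then padded_incident nv ne E w i C else X i j)"
      using head_lemma[OF assms, where C=C and X=X and B="padded_incident nv ne E w" and i=i and j=j] H B1 i
      unfolding tlayer_apply_def mlp2 unfolding f_attn_def WQ1_def WK1_def W2_def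
      by simp
  qed
qed

end
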